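(* Let $r\ge1$, let $x$ be a positive integer and let $\{(X_t,Y_t)\}_{t\ge 0}$ be the CA competition process with fitness ratio $r$ started at $(x,x)$. Let $\tau_2=\inf\{t\ge 1: X_t=Y_t\}$ be the time of the second tie (the first tie being at time $0$). Then \[ \mathbb{P}[\tau_2<\infty]\le\frac{2}{r+1}. \]
   Context: The CA competition process with fitness ratio $r\ge 1$ started at $(x_0,y_0)$ is the discrete-time Markov chain $\{(X_t,Y_t)\}_{t\ge0}$ on $\{(x,y)\in\mathbb{Z}^2: x\ge1,y\ge1\}$ with $(X_0,Y_0)=(x_0,y_0)$ and transition probabilities: from $(x,y)$ it moves to $(x+1,y)$ with probability $\frac{rx}{rx+y}$ and to $(x,y+1)$ with probability $\frac{y}{rx+y}$. $\inf\emptyset=\infty$. *)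

theory Defs
  imports Complex_Main
begin

text \<open>CA competition process with fitness ratio r: from (x,y) step to (x+1,y) with
probability r x/(r x + y), to (x,y+1) with probability y/(r x + y).\<close>

definition ca_px :: "real \<Rightarrow> nat \<Rightarrow> nat \<Rightarrow> real" where
  "ca_px r x y = r * real x / (r * real x + real y)"

definition ca_py :: "real \<Rightarrow> nat \<Rightarrow> nat \<Rightarrow> real" where
  "ca_py r x y = real y / (r * real x + real y)"

text \<open>ca_hit r n x y = probability that the chain started at (x,y) visits the diagonal
{X = Y} at some time t with 0 \<le> t \<le> n (first-step decomposition / Markov property).\<close>

fun ca_hit :: "real \<Rightarrow> nat \<Rightarrow> nat \<Rightarrow> nat \<Rightarrow> real" where
  "ca_hit r 0 x y = (if x = y then 1 else 0)"
| "ca_hit r (Suc n) x y =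
     (if x = y then 1
      else ca_px r x y * ca_hit r n (Suc x) y + ca_py r x y * ca_hit r n x (Suc y))"

text \<open>P[tau_2 \<le> n+1] for the chain started at (x,x), where tau_2 = inf{t \<ge> 1. X_t = Y_t}.\<close>

definition ca_tau2_le :: "real \<Rightarrow> nat \<Rightarrow> nat \<Rightarrow> real" where
  "ca_tau2_le r x n =
     ca_px r x x * ca_hit r n (Suc x) x + ca_py r x x * ca_hit r n x (Suc x)"

text \<open>P[tau_2 < \<infinity>] = sup over n of P[tau_2 \<le> n+1] (continuity from below).\<close>

definition ca_tau2_finite :: "real \<Rightarrow> nat \<Rightarrow> real" where
  "ca_tau2_finite r x = (SUP n. ca_tau2_le r x n)"

end

theory Submission
  imports Defs
begin

definition hh :: "real \<Rightarrow> nat \<Rightarrow> nat \<Rightarrow> real" where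
  "hh r a b = (if b \<le> a then (1/r)^(a-b) else 1)"

lemma key_ineq:
  fixes r :: real and a b :: nat
  assumes r: "r \<ge> 1" and ab: "b < a"
  shows "ca_px r a b * (1/r)^2 + ca_py r a b \<le> 1/r"
proof -
  have pos: "r * real a + real b > 0" using r ab
    by (metis add_pos_nonneg gr_zeroI less_nat_zero_code mult_pos_pos of_nat_0_le_iff of_nat_0_less_iff order_less_le_trans zero_less_one)
  have "real a + r * real b \<le> r * real a + real b"
  proof -
    have "(r - 1) * (real a - real b) \<ge> 0" using r ab by simp
    thus ?thesis by (simp add: algebra_simps)
  qed
  moreover have "r * (real a / r + real b) = real a + r * real b"
    using r by (simp add: distrib_left)
  moreover have "r * ((r * real a + real b) / r) = r * real a + real b"
    using r by simp
  ultimately have "r * (real a / r + real b) \<le> r * ((r * real a + real b) / r)"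
    by linarith
  hence A: "real a / r + real b \<le> (r * real a + real b) / r"
    using r by (meson mult_left_le_imp_le less_le_trans zero_less_one)
  have B: "ca_px r a b * (1/r)^2 + ca_py r a b = (real a / r + real b) / (r * real a + real b)"
  proof -
    have "ca_px r a b * (1/r)^2 = (real a / r) / (r * real a + real b)"
      using r unfolding ca_px_def by (simp add: power2_eq_square)
    thus ?thesis unfolding ca_py_def by (simp add: add_divide_distrib)
  qed
  have "(real a / r + real b) / (r * real a + real b) \<le> ((r * real a + real b) / r) / (r * real a + real b)"
    using A pos by (intro divide_right_mono) auto
  also have "\<dots> = 1 / r" using pos by simp
  finally show ?thesis using B by simp
qed

lemma superh:
  fixes r :: real and a b :: nat
  assumes r: "r \<ge> 1" and ab: "a \<noteq> b"
  shows "ca_px r a b * hh r (Suc a) b + ca_py r a b * hh r a (Suc b) \<le> hh r a b"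
proof -
  have pos: "r * real a + real b > 0" using r ab
    by (metis add_pos_nonneg add_nonneg_pos gr_zeroI linorder_neqE_nat less_nat_zero_code mult_pos_pos of_nat_0_le_iff of_nat_0_less_iff order_less_le_trans zero_less_one mult_nonneg_nonneg less_imp_le)
  have px0: "ca_px r a b \<ge> 0" and py0: "ca_py r a b \<ge> 0"
    using r unfolding ca_px_def ca_py_def by auto
  have sum1: "ca_px r a b + ca_py r a b = 1"
    using pos unfolding ca_px_def ca_py_def by (simp add: add_divide_distrib[symmetric])
  show ?thesis
  proof (cases "a < b")
    case True
    have h1: "hh r (Suc a) b \<le> 1" using True unfolding hh_def by auto
    have "ca_px r a b * hh r (Suc a) b \<le> ca_px r a b" using h1 px0
      by (simp add: mult_left_le)
    moreover have "hh r a (Suc b) = 1" "hh r a b = 1" using True unfolding hh_def by auto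
    ultimately show ?thesis using sum1 by simp
  next
    case False
    with ab have ba: "b < a" by simp
    then obtain k where k: "a - b = Suc k" by (cases "a - b") auto
    have e1: "hh r (Suc a) b = (1/r)^k * (1/r)^2"
      using ba k unfolding hh_def by (simp add: Suc_diff_le power_add[symmetric])
    have "a - Suc b = k" using k by simp
    hence e2: "hh r a (Suc b) = (1/r)^k" using ba unfolding hh_def by simp
    have e3: "hh r a b = (1/r)^k * (1/r)" using ba k unfolding hh_def by simp
    have q0: "(1/r)^k \<ge> 0" using r by simp
    have "ca_px r a b * hh r (Suc a) b + ca_py r a b * hh r a (Suc b)
        = (1/r)^k * (ca_px r a b * (1/r)^2 + ca_py r a b)"
      using e1 e2 by (simp add: algebra_simps)
    also have "\<dots> \<le> (1/r)^k * (1/r)"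
      using key_ineq[OF r ba] q0 by (rule mult_left_mono)
    finally show ?thesis using e3 by simp
  qed
qed

lemma hit_le:
  fixes r :: real
  assumes r: "r \<ge> 1"
  shows "ca_hit r n a b \<le> hh r a b"
proof (induction n arbitrary: a b)
  case 0
  have "hh r a b \<ge> 0" using r unfolding hh_def by simp
  thus ?case unfolding hh_def by auto
next
  case (Suc n)
  show ?case
  proof (cases "a = b")
    case True thus ?thesis unfolding hh_def by simp
  next
    case False
    have px0: "ca_px r a b \<ge> 0" and py0: "ca_py r a b \<ge> 0"
      using r unfolding ca_px_def ca_py_def by auto
    have "ca_hit r (Suc n) a b = ca_px r a b * ca_hit r n (Suc a) b + ca_py r a b * ca_hit r n a (Suc b)"
      using False by simp
    also have "\<dots> \<le> ca_px r a b * hh r (Suc a) b + ca_py r a b * hh r a (Suc b)"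
      using Suc.IH px0 py0 by (intro add_mono mult_left_mono) auto
    also have "\<dots> \<le> hh r a b" using superh[OF r False] .
    finally show ?thesis .
  qed
qed

theorem corollary1:
  fixes r :: real and x :: nat
  assumes "r \<ge> 1" and "x \<ge> 1"
  shows "ca_tau2_finite r x \<le> 2 / (r + 1)"
  unfolding ca_tau2_finite_def
proof (rule cSUP_least)
  show "UNIV \<noteq> {}" by simp
next
  fix n
  have r: "r \<ge> 1" by fact
  have xe: "r * real x + real x = (r + 1) * real x" by (simp add: algebra_simps)
  have x0: "real x > 0" using assms by simp
  have px: "ca_px r x x = r / (r + 1)" and py: "ca_py r x x = 1 / (r + 1)"
    unfolding ca_px_def ca_py_def xe using x0 by auto
  have h1: "ca_hit r n (Suc x) x \<le> 1 / r"
    using hit_le[OF r, of n "Suc x" x] unfolding hh_def by simp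
  have h2: "ca_hit r n x (Suc x) \<le> 1"
    using hit_le[OF r, of n x "Suc x"] unfolding hh_def by simp
  have "ca_tau2_le r x n \<le> r / (r + 1) * (1/r) + 1 / (r + 1) * 1"
    unfolding ca_tau2_le_def px py using r h1 h2
    by (intro add_mono mult_left_mono) auto
  also have "\<dots> = 2 / (r + 1)" using r by (simp add: field_simps)
  finally show "ca_tau2_le r x n \<le> 2 / (r + 1)" .
qed

end
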